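(* Let $p,q\ge1$ and $d=p+q$. Assume that $f$ belongs to a finite-dimensional vector subspace $V\subseteq C(\mathbb{R}^d)$ such that $\tau_h(V)\subseteq V$ for all $h\in\mathbb{R}^d$ and $O_A(V)\subseteq V$ for all $A\in\mathbf{O}(p,q)$. Then $f$ is an ordinary polynomial in $d$ real variables.
   Context: $\mathbf{O}(p,q)=\{A\in\mathrm{GL}(d,\mathbb{R}): A^TI_{p,q}A=I_{p,q}\}$, where $I_{p,q}$ is the block-diagonal matrix $\mathrm{diag}(I_p,-I_q)$ (the isometry group of the quadratic form $\sum_{k=1}^px_k^2-\sum_{k=1}^qy_k^2$). For $g\in C(\mathbb{R}^d)$: $\tau_hg(x)=g(x+h)$, $O_Ag(x)=g(Ax)$. *)

theory Defs
  imports "HOL-Analysis.Analysis"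
begin

text \<open>R^d with d = p + q is modelled as real ^ ('p + 'q), where 'p and 'q are
  finite (nonempty) index types with CARD('p) = p, CARD('q) = q.
  The first p coordinates are the Inl-indices, the last q the Inr-indices.\<close>

definition Ipq :: "real ^ ('p::finite + 'q::finite) ^ ('p + 'q)" where
  "Ipq = (\<chi> i j. if i = j then (case i of Inl _ \<Rightarrow> 1 | Inr _ \<Rightarrow> -1) else 0)"

definition indef_orth_group :: "(real ^ ('p::finite + 'q::finite) ^ ('p + 'q)) set" where
  "indef_orth_group = {A. invertible A \<and> transpose A ** Ipq ** A = Ipq}"

definition translate :: "'a::plus \<Rightarrow> ('a \<Rightarrow> 'b) \<Rightarrow> ('a \<Rightarrow> 'b)" where
  "translate h g = (\<lambda>x. g (x + h))"

definition compose_lin :: "real ^ 'n ^ 'n \<Rightarrow> (real ^ 'n::finite \<Rightarrow> 'b) \<Rightarrow> (real ^ 'n \<Rightarrow> 'b)" where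
  "compose_lin A g = (\<lambda>x. g (A *v x))"

definition cont_subspace :: "('a::topological_space \<Rightarrow> complex) set \<Rightarrow> bool" where
  "cont_subspace V \<longleftrightarrow> (\<forall>g\<in>V. continuous_on UNIV g) \<and> (\<lambda>x. 0) \<in> V \<and>
     (\<forall>g\<in>V. \<forall>h\<in>V. (\<lambda>x. g x + h x) \<in> V) \<and> (\<forall>c. \<forall>g\<in>V. (\<lambda>x. c * g x) \<in> V)"

definition fin_dim_fun :: "('a \<Rightarrow> complex) set \<Rightarrow> bool" where
  "fin_dim_fun V \<longleftrightarrow> (\<exists>B. finite B \<and> B \<subseteq> V \<and>
       V = {(\<lambda>x. \<Sum>b\<in>B. c b * b x) | c. True})"

definition is_polynomial_fun :: "(real ^ 'n::finite \<Rightarrow> complex) \<Rightarrow> bool" where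
  "is_polynomial_fun f \<longleftrightarrow> (\<exists>E :: ('n \<Rightarrow> nat) set. \<exists>c. finite E \<and>
       (\<forall>x. f x = (\<Sum>\<alpha>\<in>E. c \<alpha> * (\<Prod>i\<in>UNIV. complex_of_real ((x $ i) ^ \<alpha> i)))))"

end

theory Submission
  imports Defs "HOL-Library.Function_Algebras" "HOL-Computational_Algebra.Fundamental_Theorem_Algebra"
begin


definition Dop :: "'a::real_vector \<Rightarrow> ('a \<Rightarrow> complex) \<Rightarrow> ('a \<Rightarrow> complex)" where
  "Dop h g = (\<lambda>x. g (x + h) - g x)"

definition evop :: "'a::real_vector \<Rightarrow> complex poly \<Rightarrow> ('a \<Rightarrow> complex) \<Rightarrow> ('a \<Rightarrow> complex)" where
  "evop v p g = (\<lambda>x. \<Sum>k\<le>degree p. coeff p k * g (x + of_nat k *\<^sub>R v))"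

lemma evop_le:
  assumes "degree p \<le> N"
  shows "evop v p g x = (\<Sum>k\<le>N. coeff p k * g (x + of_nat k *\<^sub>R v))"
  unfolding evop_def
  by (rule sum.mono_neutral_left) (use assms in \<open>auto simp: coeff_eq_0\<close>)

lemma evop_pCons: "evop v (pCons a p) g x = a * g x + evop v p g (x + v)"
proof -
  have "evop v (pCons a p) g x = (\<Sum>k\<le>Suc (degree p). coeff (pCons a p) k * g (x + of_nat k *\<^sub>R v))"
    by (rule evop_le) (rule degree_pCons_le)
  also have "\<dots> = a * g x + (\<Sum>k\<le>degree p. coeff p k * g (x + of_nat (Suc k) *\<^sub>R v))"
    by (subst sum.atMost_Suc_shift) simp
  also have "(\<Sum>k\<le>degree p. coeff p k * g (x + of_nat (Suc k) *\<^sub>R v)) = evop v p g (x + v)"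
    unfolding evop_def by (intro sum.cong refl) (simp add: algebra_simps)
  finally show ?thesis .
qed

lemma evop_0 [simp]: "evop v 0 g x = 0"
  by (simp add: evop_def)

lemma evop_add: "evop v (p + q) g x = evop v p g x + evop v q g x"
proof -
  let ?N = "max (degree p) (degree q)"
  have "evop v (p + q) g x = (\<Sum>k\<le>?N. coeff (p + q) k * g (x + of_nat k *\<^sub>R v))"
    by (rule evop_le) (rule degree_add_le_max)
  also have "\<dots> = (\<Sum>k\<le>?N. coeff p k * g (x + of_nat k *\<^sub>R v)) + (\<Sum>k\<le>?N. coeff q k * g (x + of_nat k *\<^sub>R v))"
    by (simp add: sum.distrib algebra_simps)
  also have "\<dots> = evop v p g x + evop v q g x"
    using evop_le[of p ?N v g x] evop_le[of q ?N v g x] by simp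
  finally show ?thesis .
qed

lemma evop_smult: "evop v (smult c p) g x = c * evop v p g x"
proof -
  have "evop v (smult c p) g x = (\<Sum>k\<le>degree p. coeff (smult c p) k * g (x + of_nat k *\<^sub>R v))"
    by (rule evop_le) (rule degree_smult_le)
  also have "\<dots> = c * evop v p g x"
    by (simp add: evop_def sum_distrib_left algebra_simps)
  finally show ?thesis .
qed

lemma evop_mult: "evop v (p * q) g = evop v p (evop v q g)"
proof (induction p rule: pCons_induct)
  case 0
  then show ?case by (simp add: fun_eq_iff)
next
  case (pCons a p)
  show ?case
  proof
    fix x
    have "evop v (pCons a p * q) g x = evop v (smult a q + pCons 0 (p * q)) g x" by simp
    also have "\<dots> = a * evop v q g x + evop v (p * q) g (x + v)"
      by (simp add: evop_add evop_smult evop_pCons)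
    also have "\<dots> = evop v (pCons a p) (evop v q g) x"
      by (simp add: evop_pCons pCons.IH)
    finally show "evop v (pCons a p * q) g x = evop v (pCons a p) (evop v q g) x" .
  qed
qed

lemma evop_eig:
  assumes "\<forall>x. w (x + v) = z * w x"
  shows "evop v p w x = poly p z * w x"
proof (induction p arbitrary: x rule: pCons_induct)
  case 0
  then show ?case by simp
next
  case (pCons a p)
  show ?case by (simp add: evop_pCons pCons.IH assms ring_distribs mult_ac)
qed

lemma evop_linfac: "evop v [:-c, 1:] g x = g (x + v) - c * g x"
  by (simp add: evop_pCons)

lemma Dop_evop: "Dop v g = evop v [:-1, 1:] g"
  by (simp add: fun_eq_iff Dop_def evop_linfac)

lemma evop_sum_fun:
  "evop v p (\<lambda>x. \<Sum>b\<in>B. c b * b x) x = (\<Sum>b\<in>B. c b * evop v p b x)"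
  unfolding evop_def by (simp add: sum_distrib_left sum.swap[of _ B] algebra_simps)

lemma evop_monom: "evop v (monom c k) g x = c * g (x + of_nat k *\<^sub>R v)"
proof -
  have "evop v (monom c k) g x = (\<Sum>j\<le>k. coeff (monom c k) j * g (x + of_nat j *\<^sub>R v))"
    by (rule evop_le) (simp add: degree_monom_le)
  also have "\<dots> = (\<Sum>j\<le>k. if j = k then c * g (x + of_nat k *\<^sub>R v) else 0)"
    by (intro sum.cong refl) (auto simp: coeff_monom)
  also have "\<dots> = c * g (x + of_nat k *\<^sub>R v)"
    by (subst sum.delta) auto
  finally show ?thesis .
qed

lemma evop_sum_poly: "evop v (\<Sum>k\<in>K. P k) g x = (\<Sum>k\<in>K. evop v (P k) g x)"
  by (induction K rule: infinite_finite_induct) (auto simp: evop_add)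

lemma evop_one: "evop v 1 g = g"
  by (simp add: fun_eq_iff one_pCons evop_pCons)

definition tinv :: "('a::real_normed_vector \<Rightarrow> complex) set \<Rightarrow> bool" where
  "tinv V \<longleftrightarrow> cont_subspace V \<and> (\<forall>h. \<forall>g\<in>V. translate h g \<in> V)"

lemma tinv_add: "tinv V \<Longrightarrow> g \<in> V \<Longrightarrow> h \<in> V \<Longrightarrow> (\<lambda>x. g x + h x) \<in> V"
  by (simp add: tinv_def cont_subspace_def)
lemma tinv_smult: "tinv V \<Longrightarrow> g \<in> V \<Longrightarrow> (\<lambda>x. c * g x) \<in> V"
  by (simp add: tinv_def cont_subspace_def)
lemma tinv_zero: "tinv V \<Longrightarrow> (\<lambda>x. 0) \<in> V"
  by (simp add: tinv_def cont_subspace_def)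
lemma tinv_cont: "tinv V \<Longrightarrow> g \<in> V \<Longrightarrow> continuous_on UNIV g"
  by (simp add: tinv_def cont_subspace_def)
lemma tinv_transl: "tinv V \<Longrightarrow> g \<in> V \<Longrightarrow> (\<lambda>x. g (x + h)) \<in> V"
  using translate_def[of h g] unfolding tinv_def by metis

lemma tinv_sum: "tinv V \<Longrightarrow> (\<And>k. k \<in> K \<Longrightarrow> F k \<in> V) \<Longrightarrow> (\<lambda>x. \<Sum>k\<in>K. F k x) \<in> V"
proof (induction K rule: infinite_finite_induct)
  case (infinite A)
  then show ?case by (simp add: tinv_zero)
next
  case empty
  then show ?case by (simp add: tinv_zero)
next
  case (insert a A)
  then show ?case by (simp add: tinv_add)
qed

lemma tinv_lincomb: "tinv V \<Longrightarrow> (\<And>k. k \<in> K \<Longrightarrow> F k \<in> V) \<Longrightarrow> (\<lambda>x. \<Sum>k\<in>K. c k * F k x) \<in> V"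
  using tinv_sum[of V K "\<lambda>k x. c k * F k x"] tinv_smult by blast

lemma tinv_diff: "tinv V \<Longrightarrow> g \<in> V \<Longrightarrow> h \<in> V \<Longrightarrow> (\<lambda>x. g x - h x) \<in> V"
  using tinv_add[of V g "\<lambda>x. (-1) * h x"] tinv_smult[of V h "-1"] by simp

lemma tinv_Dop: "tinv V \<Longrightarrow> g \<in> V \<Longrightarrow> Dop h g \<in> V"
  unfolding Dop_def by (intro tinv_diff tinv_transl)

lemma tinv_Dop_pow: "tinv V \<Longrightarrow> g \<in> V \<Longrightarrow> (Dop h ^^ n) g \<in> V"
  by (induction n) (auto intro: tinv_Dop)

lemma tinv_evop: "tinv V \<Longrightarrow> g \<in> V \<Longrightarrow> evop v p g \<in> V"
proof (induction p rule: pCons_induct)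
  case 0
  then show ?case using tinv_zero[of V] by (simp add: evop_def[of v 0])
next
  case (pCons a p)
  have "evop v (pCons a p) g = (\<lambda>x. a * g x + evop v p g (x + v))"
    by (simp add: fun_eq_iff evop_pCons)
  also have "\<dots> \<in> V"
    using pCons by (intro tinv_add tinv_smult tinv_transl) auto
  finally show ?case .
qed


lemma sum_fun_apply: "(\<Sum>v\<in>S. f v) x = (\<Sum>v\<in>S. f v x)"
  by (induction S rule: infinite_finite_induct) auto

lemma lin_dep:
  fixes B :: "('a \<Rightarrow> complex) set" and \<phi> :: "nat \<Rightarrow> 'a \<Rightarrow> complex"
  assumes fin: "finite B" and sp: "\<And>k. k \<le> card B \<Longrightarrow> \<exists>c. \<phi> k = (\<lambda>x. \<Sum>b\<in>B. c b * b x)"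
  shows "\<exists>c. (\<exists>k\<le>card B. c k \<noteq> 0) \<and> (\<forall>x. (\<Sum>k\<le>card B. c k * \<phi> k x) = 0)"
proof -
  interpret fv: vector_space "\<lambda>(c::complex) (f::'a\<Rightarrow>complex). (\<lambda>x. c * f x)"
    by unfold_locales (auto simp: fun_eq_iff algebra_simps)
  let ?N = "card B"
  show ?thesis
  proof (cases "inj_on \<phi> {..?N}")
    case True
    define S where "S = \<phi> ` {..?N}"
    have finS: "finite S" by (simp add: S_def)
    have cardS: "card S = Suc ?N" using True by (simp add: S_def card_image)
    have "S \<subseteq> fv.span B"
    proof
      fix f assume "f \<in> S"
      then obtain k where k: "k \<le> ?N" "f = \<phi> k" by (auto simp: S_def)
      obtain c where "\<phi> k = (\<lambda>x. \<Sum>b\<in>B. c b * b x)" using sp k by blast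
      then have "f = (\<Sum>b\<in>B. (\<lambda>x. c b * b x))" using k by (simp add: fun_eq_iff sum_fun_apply)
      then show "f \<in> fv.span B" unfolding fv.span_finite[OF fin] by blast
    qed
    then have "fv.dependent S"
      using fv.independent_span_bound[OF fin _ \<open>S \<subseteq> fv.span B\<close>] cardS by auto
    then obtain u where u: "\<exists>v\<in>S. u v \<noteq> 0" "(\<Sum>v\<in>S. (\<lambda>x. u v * v x)) = 0"
      using fv.dependent_finite[OF finS] by blast
    show ?thesis
    proof (rule exI[of _ "\<lambda>k. u (\<phi> k)"], intro conjI allI)
      show "\<exists>k\<le>?N. u (\<phi> k) \<noteq> 0" using u(1) by (auto simp: S_def)
      fix x
      have "(\<Sum>k\<le>?N. u (\<phi> k) * \<phi> k x) = (\<Sum>v\<in>S. u v * v x)"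
        unfolding S_def using True by (simp add: sum.reindex)
      also have "\<dots> = (\<Sum>v\<in>S. (\<lambda>x. u v * v x)) x" by (simp add: sum_fun_apply)
      also have "\<dots> = 0" using u(2) by simp
      finally show "(\<Sum>k\<le>?N. u (\<phi> k) * \<phi> k x) = 0" .
    qed
  next
    case False
    then obtain i j where ij: "i \<le> ?N" "j \<le> ?N" "i \<noteq> j" "\<phi> i = \<phi> j"
      unfolding inj_on_def by auto
    define c :: "nat \<Rightarrow> complex" where "c = (\<lambda>k. if k = i then 1 else if k = j then -1 else 0)"
    show ?thesis
    proof (rule exI[of _ c], intro conjI allI)
      show "\<exists>k\<le>?N. c k \<noteq> 0" using ij by (auto simp: c_def)
      fix x
      have "(\<Sum>k\<le>?N. c k * \<phi> k x) = (\<Sum>k\<in>{i,j}. c k * \<phi> k x)"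
        by (rule sum.mono_neutral_right) (use ij in \<open>auto simp: c_def\<close>)
      also have "\<dots> = 0" using ij by (simp add: c_def)
      finally show "(\<Sum>k\<le>?N. c k * \<phi> k x) = 0" .
    qed
  qed
qed

definition eigs :: "('a::real_normed_vector \<Rightarrow> complex) set \<Rightarrow> 'a \<Rightarrow> complex set" where
  "eigs V v = {z. \<exists>w\<in>V. w \<noteq> (\<lambda>x. 0) \<and> (\<forall>x. w (x + v) = z * w x)}"

lemma fta_factor:
  fixes P :: "complex poly"
  assumes "degree P > 0"
  obtains c P' where "P = [:-c, 1:] * P'" "P' \<noteq> 0" "degree P = Suc (degree P')"
proof -
  have "\<not> constant (poly P)" using assms by (simp add: constant_degree)
  then obtain c where "poly P c = 0" using fundamental_theorem_of_algebra by blast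
  then obtain P' where P': "P = [:-c, 1:] * P'" using poly_eq_0_iff_dvd by (metis dvdE)
  then have "P' \<noteq> 0" using assms by auto
  moreover have "degree ([:-c, 1:] * P') = degree [:-c, 1:] + degree P'"
    by (rule degree_mult_eq) (use \<open>P' \<noteq> 0\<close> in auto)
  then have "degree P = Suc (degree P')" using P' by simp
  ultimately show ?thesis using that P' by blast
qed

lemma evop_const: "evop v [:c:] w = (\<lambda>x. c * w x)"
  by (simp add: fun_eq_iff evop_pCons)

lemma deg0_const: "degree (P::complex poly) = 0 \<Longrightarrow> P = [:coeff P 0:]"
  by (metis degree_0_id)

lemma root_eig:
  assumes V: "tinv V" and "P \<noteq> 0" "w \<in> V" "w \<noteq> (\<lambda>x. 0)" "evop v P w = (\<lambda>x. 0)"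
  shows "\<exists>z. poly P z = 0 \<and> z \<in> eigs V v"
  using assms(2-)
proof (induction "degree P" arbitrary: P rule: less_induct)
  case less
  show ?case
  proof (cases "degree P = 0")
    case True
    then have P: "P = [:coeff P 0:]" by (rule deg0_const)
    with less.prems(1) have "coeff P 0 \<noteq> 0" by (metis pCons_0_0)
    moreover have "(\<lambda>x. coeff P 0 * w x) = (\<lambda>x. 0)" using less.prems(4) P evop_const by metis
    ultimately have "w = (\<lambda>x. 0)" by (simp add: fun_eq_iff)
    with less.prems(3) show ?thesis by blast
  next
    case False
    then obtain c P' where P': "P = [:-c, 1:] * P'" "P' \<noteq> 0" "degree P = Suc (degree P')"
      using fta_factor by blast
    define u where "u = evop v P' w"
    have uV: "u \<in> V" unfolding u_def using V less.prems(2) by (rule tinv_evop)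
    have ueq: "\<forall>x. u (x + v) = c * u x"
    proof
      fix x
      have "evop v P w x = 0" using less.prems(4) by simp
      then have "evop v [:-c, 1:] u x = 0" unfolding u_def P'(1) evop_mult .
      then show "u (x + v) = c * u x" by (simp add: evop_linfac)
    qed
    show ?thesis
    proof (cases "u = (\<lambda>x. 0)")
      case False
      then have "c \<in> eigs V v" using uV ueq unfolding eigs_def by blast
      moreover have "poly P c = 0" using P'(1) by simp
      ultimately show ?thesis by blast
    next
      case True
      then obtain z where "poly P' z = 0" "z \<in> eigs V v"
        using less.hyps[of P'] P' less.prems u_def by auto
      then show ?thesis using P'(1) by auto
    qed
  qed
qed

lemma unipotent_step:
  assumes V: "tinv V" and E1: "\<forall>z\<in>eigs V v. z = 1"
    and "P \<noteq> 0" "w \<in> V" "evop v P w = (\<lambda>x. 0)"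
  shows "(Dop v ^^ degree P) w = (\<lambda>x. 0)"
  using assms(3-)
proof (induction "degree P" arbitrary: P w rule: less_induct)
  case less
  show ?case
  proof (cases "degree P = 0")
    case True
    then have P: "P = [:coeff P 0:]" by (rule deg0_const)
    with less.prems(1) have "coeff P 0 \<noteq> 0" by (metis pCons_0_0)
    moreover have "(\<lambda>x. coeff P 0 * w x) = (\<lambda>x. 0)" using less.prems(3) P evop_const by metis
    ultimately have "w = (\<lambda>x. 0)" by (simp add: fun_eq_iff)
    with True show ?thesis by simp
  next
    case False
    then obtain c P' where P': "P = [:-c, 1:] * P'" "P' \<noteq> 0" "degree P = Suc (degree P')"
      using fta_factor by blast
    show ?thesis
    proof (cases "c = 1")
      case True
      define w' where "w' = Dop v w"
      have w'V: "w' \<in> V" unfolding w'_def using V less.prems(2) by (rule tinv_Dop)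
      have "evop v P' w' = evop v (P' * [:-1, 1:]) w"
        by (simp only: w'_def Dop_evop evop_mult)
      also have "\<dots> = evop v P w" using P'(1) True by (simp add: mult.commute)
      finally have "evop v P' w' = (\<lambda>x. 0)" using less.prems(3) by simp
      then have "(Dop v ^^ degree P') w' = (\<lambda>x. 0)"
        using less.hyps[of P' w'] P' w'V by auto
      moreover have "(Dop v ^^ degree P) w = (Dop v ^^ degree P') (Dop v w)"
        using P'(3) by (simp only: funpow_Suc_right o_apply)
      ultimately show ?thesis by (simp add: w'_def)
    next
      case False
      define u where "u = evop v P' w"
      have uV: "u \<in> V" unfolding u_def using V less.prems(2) by (rule tinv_evop)
      have ueq: "\<forall>x. u (x + v) = c * u x"
      proof
        fix x
        have "evop v P w x = 0" using less.prems(3) by simp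
        then have "evop v [:-c, 1:] u x = 0" unfolding u_def P'(1) evop_mult .
        then show "u (x + v) = c * u x" by (simp add: evop_linfac)
      qed
      have "u = (\<lambda>x. 0)"
      proof (rule ccontr)
        assume "u \<noteq> (\<lambda>x. 0)"
        then have "c \<in> eigs V v" using uV ueq unfolding eigs_def by blast
        with E1 False show False by blast
      qed
      then have "(Dop v ^^ degree P') w = (\<lambda>x. 0)"
        using less.hyps[of P' w] P' less.prems u_def by auto
      then show ?thesis using P'(3) by (simp add: Dop_def)
    qed
  qed
qed


definition bst :: "'p \<Rightarrow> 'q \<Rightarrow> real \<Rightarrow> real ^ ('p::finite + 'q::finite) ^ ('p + 'q)" where
  "bst a b r = (\<chi> i j. if i = j then (if i = Inl a \<or> i = Inr b then cosh r else 1)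
      else if (i = Inl a \<and> j = Inr b) \<or> (i = Inr b \<and> j = Inl a) then sinh r else 0)"

definition nullv :: "'p \<Rightarrow> 'q \<Rightarrow> real \<Rightarrow> real ^ ('p::finite + 'q::finite)" where
  "nullv a b s = axis (Inl a) 1 + s *\<^sub>R axis (Inr b) 1"

lemma sum_UNIV_supp:
  fixes f :: "'a::finite \<Rightarrow> 'b::comm_monoid_add"
  assumes "\<And>k. k \<notin> T \<Longrightarrow> f k = 0"
  shows "sum f UNIV = sum f T"
  by (rule sum.mono_neutral_right) (use assms in auto)

lemma mm_entry: "(M ** N) $ i $ j = (\<Sum>k\<in>UNIV. M $ i $ k * N $ k $ j)"
  by (simp add: matrix_matrix_mult_def)

lemma Ipq_mult: "(Ipq ** M) $ i $ j = (case i of Inl _ \<Rightarrow> 1 | Inr _ \<Rightarrow> -1) * M $ i $ j"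
proof -
  have "(Ipq ** M) $ i $ j = (\<Sum>k\<in>UNIV. Ipq $ i $ k * M $ k $ j)"
    by (simp add: matrix_matrix_mult_def)
  also have "\<dots> = (\<Sum>k\<in>{i}. Ipq $ i $ k * M $ k $ j)"
    by (rule sum_UNIV_supp) (simp add: Ipq_def)
  finally show ?thesis by (simp add: Ipq_def)
qed

lemma Ipq_Ipq: "(Ipq :: real ^ ('p::finite + 'q::finite) ^ ('p + 'q)) ** Ipq = mat 1"
  by (simp add: vec_eq_iff Ipq_mult) (auto simp: Ipq_def mat_def split: sum.splits)

lemma bst_orth: "bst a b r \<in> indef_orth_group"
proof -
  let ?A = "bst a b r"
  have eq: "transpose ?A ** Ipq ** ?A = Ipq"
  proof -
    have "(transpose ?A ** (Ipq ** ?A)) $ i $ j = Ipq $ i $ j" for i j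
    proof -
      have "(transpose ?A ** (Ipq ** ?A)) $ i $ j = (\<Sum>k\<in>UNIV. ?A $ k $ i * ((case k of Inl _ \<Rightarrow> 1 | Inr _ \<Rightarrow> -1) * ?A $ k $ j))"
        by (subst mm_entry) (simp add: transpose_def Ipq_mult)
      also have "\<dots> = (\<Sum>k\<in>{Inl a, Inr b, i}. ?A $ k $ i * ((case k of Inl _ \<Rightarrow> 1 | Inr _ \<Rightarrow> -1) * ?A $ k $ j))"
        by (rule sum_UNIV_supp) (auto simp: bst_def)
      also have "\<dots> = Ipq $ i $ j"
      proof (cases "i = Inl a \<or> i = Inr b")
        case True
        then have T: "{Inl a, Inr b, i} = {Inl a, Inr b}" by auto
        show ?thesis unfolding T
          using True hyperbolic_pythagoras[of r]
          by (cases "j = Inl a"; cases "j = Inr b")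
             (auto simp: bst_def Ipq_def power2_eq_square algebra_simps split: sum.splits)
      next
        case False
        then show ?thesis
          using hyperbolic_pythagoras[of r]
          by (cases "j = Inl a"; cases "j = Inr b"; cases "i = j")
             (auto simp: bst_def Ipq_def power2_eq_square algebra_simps split: sum.splits)
      qed
      finally show ?thesis .
    qed
    then show ?thesis by (simp add: vec_eq_iff matrix_mul_assoc)
  qed
  have "(Ipq ** transpose ?A ** Ipq) ** ?A = mat 1"
    by (metis Ipq_Ipq eq matrix_mul_assoc)
  then have "invertible ?A" using invertible_left_inverse by blast
  with eq show ?thesis by (simp add: indef_orth_group_def)
qed



lemma bst_null:
  assumes "s = 1 \<or> s = -1"
  shows "bst a b r *v nullv a b s = exp (s * r) *\<^sub>R nullv a b s"
proof -
  have "(bst a b r *v nullv a b s) $ i = (exp (s * r) *\<^sub>R nullv a b s) $ i" for i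
  proof -
    have "(bst a b r *v nullv a b s) $ i = (\<Sum>j\<in>UNIV. bst a b r $ i $ j * nullv a b s $ j)"
      by (simp add: matrix_vector_mult_def)
    also have "\<dots> = (\<Sum>j\<in>{Inl a, Inr b}. bst a b r $ i $ j * nullv a b s $ j)"
      by (rule sum_UNIV_supp) (auto simp: nullv_def axis_def)
    also have "\<dots> = (exp (s * r) *\<^sub>R nullv a b s) $ i"
      using assms
      by (cases "i = Inl a"; cases "i = Inr b")
         (auto simp: bst_def nullv_def axis_def cosh_def sinh_def field_simps)
    finally show ?thesis .
  qed
  then show ?thesis by (simp add: vec_eq_iff)
qed



locale pqctx =
  fixes V :: "(real ^ ('p::finite + 'q::finite) \<Rightarrow> complex) set" and B
  assumes tV: "tinv V" and OI: "\<forall>A\<in>indef_orth_group. \<forall>g\<in>V. compose_lin A g \<in> V"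
    and finB: "finite B" and BV: "B \<subseteq> V" and Vspan: "V = {(\<lambda>x. \<Sum>b\<in>B. c b * b x) | c. True}"
begin

lemma eig_scale:
  assumes s: "s = 1 \<or> s = -1" and c: "c > 0"
    and z: "z \<in> eigs V (t *\<^sub>R nullv a b s)"
  shows "z \<in> eigs V (c *\<^sub>R (t *\<^sub>R nullv a b s))"
proof -
  let ?v = "t *\<^sub>R nullv a b s"
  obtain w where w: "w \<in> V" "w \<noteq> (\<lambda>x. 0)" "\<forall>x. w (x + ?v) = z * w x"
    using z unfolding eigs_def by blast
  define r where "r = - s * ln c"
  have "s * r = - ln c" using s by (auto simp: r_def)
  then have er: "exp (s * r) = inverse c" using c by (simp add: exp_minus)
  define A where "A = bst a b r"
  have AO: "A \<in> indef_orth_group" unfolding A_def by (rule bst_orth)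
  have Av: "A *v (c *\<^sub>R ?v) = ?v"
    using bst_null[OF s, of a b r] er c
    by (simp add: A_def matrix_vector_mult_scaleR scaleR_scaleR)
  define w' where "w' = compose_lin A w"
  have w'V: "w' \<in> V" using OI AO w(1) by (simp add: w'_def)
  have w'eq: "\<forall>x. w' (x + c *\<^sub>R ?v) = z * w' x"
    using w(3) Av by (simp add: w'_def compose_lin_def matrix_vector_right_distrib)
  have "w' \<noteq> (\<lambda>x. 0)"
  proof
    assume w'0: "w' = (\<lambda>x. 0)"
    obtain A' where "A ** A' = mat 1"
      using AO unfolding indef_orth_group_def invertible_def by blast
    then have "\<And>y. A *v (A' *v y) = y" by (simp add: matrix_vector_mul_assoc)
    then have "\<And>y. w y = 0" using w'0 unfolding w'_def compose_lin_def by (metis)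
    with w(2) show False by auto
  qed
  with w'V w'eq show ?thesis unfolding eigs_def by blast
qed

lemma in_span: "g \<in> V \<Longrightarrow> \<exists>c. g = (\<lambda>x. \<Sum>b\<in>B. c b * b x)"
  using Vspan by blast

lemma ann1:
  assumes "g \<in> V"
  shows "\<exists>P. P \<noteq> 0 \<and> degree P \<le> card B \<and> evop v P g = (\<lambda>x. 0)"
proof -
  let ?N = "card B"
  have "\<exists>c. (\<lambda>x. g (x + of_nat k *\<^sub>R v)) = (\<lambda>x. \<Sum>b\<in>B. c b * b x)" for k
    using in_span[OF tinv_transl[OF tV assms]] by blast
  then obtain c where c: "\<exists>k\<le>?N. c k \<noteq> 0" "\<forall>x. (\<Sum>k\<le>?N. c k * g (x + of_nat k *\<^sub>R v)) = 0"
    using lin_dep[OF finB, of "\<lambda>k x. g (x + of_nat k *\<^sub>R v)"] by blast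
  define P where "P = (\<Sum>k\<le>?N. monom (c k) k)"
  have coeffP: "coeff P j = (if j \<le> ?N then c j else 0)" for j
  proof -
    have "coeff P j = (\<Sum>k\<le>?N. if k = j then c k else 0)"
      by (simp add: P_def coeff_sum coeff_monom)
    also have "\<dots> = (if j \<le> ?N then c j else 0)"
      by (simp add: sum.delta)
    finally show ?thesis .
  qed
  have degP: "degree P \<le> ?N" by (rule degree_le) (simp add: coeffP)
  have "P \<noteq> 0" using c(1) coeffP by (metis coeff_0)
  moreover have "evop v P g = (\<lambda>x. 0)"
  proof
    fix x
    have "evop v P g x = (\<Sum>k\<le>?N. coeff P k * g (x + of_nat k *\<^sub>R v))"
      by (rule evop_le[OF degP])
    also have "\<dots> = 0" using c(2) by (simp add: coeffP)
    finally show "evop v P g x = 0" .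
  qed
  ultimately show ?thesis using degP by blast
qed

lemma evop_zero_fun: "evop v P (\<lambda>x. 0) = (\<lambda>x. 0)"
  by (simp add: evop_def fun_eq_iff)

lemma annV: "\<exists>P. P \<noteq> 0 \<and> (\<forall>w\<in>V. evop v P w = (\<lambda>x. 0))"
proof -
  have "\<forall>b\<in>B. \<exists>P. P \<noteq> 0 \<and> evop v P b = (\<lambda>x. 0)"
    using ann1 BV by blast
  then obtain Pb where Pb: "\<And>b. b \<in> B \<Longrightarrow> Pb b \<noteq> 0 \<and> evop v (Pb b) b = (\<lambda>x. 0)"
    by metis
  define P where "P = (\<Prod>b\<in>B. Pb b)"
  have "P \<noteq> 0" unfolding P_def using Pb finB by (simp add: prod_zero_iff)
  moreover have Pkill: "evop v P b = (\<lambda>x. 0)" if "b \<in> B" for b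
  proof -
    have "P = (\<Prod>b'\<in>B - {b}. Pb b') * Pb b"
      unfolding P_def using that finB by (simp add: prod.remove mult.commute)
    then show ?thesis using Pb[OF that] by (simp add: evop_mult evop_zero_fun)
  qed
  moreover have "evop v P w = (\<lambda>x. 0)" if wV: "w \<in> V" for w
  proof -
    obtain c where wc: "w = (\<lambda>x. \<Sum>b\<in>B. c b * b x)" using in_span[OF wV] by blast
    have "evop v P (\<lambda>x. \<Sum>b\<in>B. c b * b x) = (\<lambda>x. 0)"
      using Pkill by (simp add: fun_eq_iff evop_sum_fun)
    then show ?thesis using wc by simp
  qed
  ultimately show ?thesis by blast
qed

lemma eigs_finite: "finite (eigs V v)"
proof -
  obtain P where P: "P \<noteq> 0" "\<forall>w\<in>V. evop v P w = (\<lambda>x. 0)" using annV by blast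
  have "eigs V v \<subseteq> {z. poly P z = 0}"
  proof
    fix z assume "z \<in> eigs V v"
    then obtain w where w: "w \<in> V" "w \<noteq> (\<lambda>x. 0)" "\<forall>x. w (x + v) = z * w x"
      unfolding eigs_def by blast
    then obtain x0 where "w x0 \<noteq> 0" by auto
    moreover have "evop v P w x0 = poly P z * w x0" by (rule evop_eig[OF w(3)])
    ultimately show "z \<in> {z. poly P z = 0}" using P w(1) by auto
  qed
  then show ?thesis using poly_roots_finite[OF P(1)] by (rule finite_subset)
qed

lemma eigs_nonzero: "0 \<notin> eigs V v"
proof
  assume "0 \<in> eigs V v"
  then obtain w :: "_ \<Rightarrow> complex" where w: "w \<noteq> (\<lambda>x. 0)" "\<forall>x. w (x + v) = 0 * w x" unfolding eigs_def mem_Collect_eq by blast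
  have "w y = 0" for y using w(2)[rule_format, of "y - v"] by simp
  with w(1) show False by auto
qed

end


lemma roots_one:
  fixes F :: "complex set"
  assumes fin: "finite F" and nz: "0 \<notin> F" and H: "\<forall>z\<in>F. \<forall>m\<ge>1. \<exists>y\<in>F. y ^ m = z"
    and zF: "z \<in> F"
  shows "z = 1"
proof -
  have step1: "\<exists>r\<ge>1. z ^ r = 1" if zF: "z \<in> F" for z
  proof -
    obtain y where y: "\<And>m. m \<ge> 1 \<Longrightarrow> y m \<in> F \<and> (y m) ^ m = z"
      using H zF by metis
    let ?A = "{1..card F + 1}"
    have "\<not> inj_on y ?A"
    proof
      assume "inj_on y ?A"
      moreover have "y ` ?A \<subseteq> F" using y by auto
      ultimately have "card ?A \<le> card F" using card_inj_on_le fin by blast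
      then show False by simp
    qed
    then obtain m1 m2 where m: "m1 \<in> ?A" "m2 \<in> ?A" "m1 \<noteq> m2" "y m1 = y m2"
      unfolding inj_on_def by blast
    have "\<exists>a b. 1 \<le> a \<and> a < b \<and> y a = y b"
    proof (cases "m1 < m2")
      case True then show ?thesis using m by auto
    next
      case False then have "m2 < m1" using m(3) by simp
      then show ?thesis using m by (intro exI[of _ m2] exI[of _ m1]) auto
    qed
    then obtain a b where ab: "1 \<le> a" "a < b" "y a = y b" by blast
    define u where "u = y a"
    have ua: "u ^ a = z" using y[of a] ab by (simp add: u_def)
    have ub: "u ^ b = z" using y[of b] ab by (simp add: u_def)
    have u0: "u \<noteq> 0" using y[of a] ab nz by (auto simp: u_def)
    have "u ^ b = u ^ a * u ^ (b - a)" using ab by (simp add: power_add[symmetric])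
    then have "u ^ (b - a) = 1" using ua ub u0 by (metis mult_cancel_left1 power_eq_0_iff)
    then have "z ^ (b - a) = 1" using ua by (metis power_mult power_mult_distrib power_one mult.commute)
    then show ?thesis using ab by (intro exI[of _ "b - a"]) auto
  qed
  obtain r where r: "\<And>z. z \<in> F \<Longrightarrow> r z \<ge> 1 \<and> z ^ (r z) = 1"
    using step1 by metis
  define L where "L = (\<Prod>z\<in>F. r z)"
  have L1: "L \<ge> 1" unfolding L_def using r
    by (metis One_nat_def Suc_le_eq prod_pos)
  obtain y where y: "y \<in> F" "y ^ L = z" using H zF L1 by blast
  have "r y dvd L" unfolding L_def using fin y(1) by (rule dvd_prodI)
  then obtain k where "L = r y * k" by blast
  then have "y ^ L = 1" using r[OF y(1)] by (simp add: power_mult)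
  then show ?thesis using y by simp
qed

context pqctx begin

lemma null_eigs_one:
  assumes s: "s = 1 \<or> s = -1"
  shows "\<forall>z\<in>eigs V (t *\<^sub>R nullv a b s). z = 1"
proof
  let ?v = "t *\<^sub>R nullv a b s"
  fix z assume zE: "z \<in> eigs V ?v"
  have H: "\<forall>z\<in>eigs V ?v. \<forall>m\<ge>1. \<exists>y\<in>eigs V ?v. y ^ m = z"
  proof (intro ballI allI impI)
    fix z :: complex and m :: nat
    assume z: "z \<in> eigs V ?v" and m: "m \<ge> 1"
    define u where "u = (t / real m) *\<^sub>R nullv a b s"
    have mu: "real m *\<^sub>R u = ?v" using m by (simp add: u_def)
    have sub: "eigs V u \<subseteq> eigs V ?v"
    proof
      fix y assume yu: "y \<in> eigs V u"
      have "y \<in> eigs V (real m *\<^sub>R u)"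
        using eig_scale[OF s, of "real m" y "t / real m" a b] yu m unfolding u_def by simp
      then show "y \<in> eigs V ?v" using mu by simp
    qed
    obtain w where w: "w \<in> V" "w \<noteq> (\<lambda>x. 0)" "\<forall>x. w (x + ?v) = z * w x"
      using z unfolding eigs_def by blast
    define P where "P = monom 1 m + smult (-1) [:z:]"
    have "coeff P m = 1" using m by (simp add: P_def coeff_pCons split: nat.splits)
    then have P0: "P \<noteq> 0" by auto
    have "evop u P w = (\<lambda>x. 0)"
    proof
      fix x
      have "evop u P w x = evop u (monom 1 m) w x + evop u (smult (-1) [:z:]) w x"
        unfolding P_def by (rule evop_add)
      also have "\<dots> = w (x + ?v) - z * w x"
        by (simp add: evop_monom evop_smult evop_const mu)
      also have "\<dots> = 0" using w(3) by simp
      finally show "evop u P w x = 0" .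
    qed
    then obtain y where "poly P y = 0" "y \<in> eigs V u"
      using root_eig[OF tV P0 w(1) w(2)] by blast
    then show "\<exists>y\<in>eigs V ?v. y ^ m = z" using sub by (auto simp: P_def poly_monom)
  qed
  show "z = 1" by (rule roots_one[OF eigs_finite eigs_nonzero H zE])
qed

lemma null_Dop_zero:
  assumes s: "s = 1 \<or> s = -1" and g: "g \<in> V"
  shows "(Dop (t *\<^sub>R nullv a b s) ^^ card B) g = (\<lambda>x. 0)"
proof -
  let ?v = "t *\<^sub>R nullv a b s"
  obtain P where P: "P \<noteq> 0" "degree P \<le> card B" "evop ?v P g = (\<lambda>x. 0)"
    using ann1[OF g] by blast
  have d: "(Dop ?v ^^ degree P) g = (\<lambda>x. 0)"
    by (rule unipotent_step[OF tV null_eigs_one[OF s] P(1) g P(3)])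
  have z: "(Dop ?v ^^ k) (\<lambda>x. 0) = (\<lambda>x. 0)" for k
    by (induction k) (auto simp: Dop_def)
  have "card B = (card B - degree P) + degree P" using P(2) by simp
  then have "(Dop ?v ^^ card B) g = (Dop ?v ^^ (card B - degree P)) ((Dop ?v ^^ degree P) g)"
    by (metis funpow_add o_apply)
  then show ?thesis using d z by simp
qed

end


definition polyfun :: "(real \<Rightarrow> complex) \<Rightarrow> bool" where
  "polyfun F \<longleftrightarrow> (\<exists>p. \<forall>t. F t = poly p (complex_of_real t))"

lemma polyfun_const: "polyfun (\<lambda>t. c)"
  unfolding polyfun_def by (rule exI[of _ "[:c:]"]) simp

lemma polyfun_add: "polyfun F \<Longrightarrow> polyfun G \<Longrightarrow> polyfun (\<lambda>t. F t + G t)"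
  unfolding polyfun_def by (metis poly_add)

lemma polyfun_mult: "polyfun F \<Longrightarrow> polyfun G \<Longrightarrow> polyfun (\<lambda>t. F t * G t)"
  unfolding polyfun_def by (metis poly_mult)

lemma polyfun_sum: "(\<And>k. k \<in> K \<Longrightarrow> polyfun (F k)) \<Longrightarrow> polyfun (\<lambda>t. \<Sum>k\<in>K. F k t)"
proof (induction K rule: infinite_finite_induct)
  case (infinite A) then show ?case by (simp add: polyfun_const)
next
  case empty then show ?case by (simp add: polyfun_const)
next
  case (insert a A) then show ?case by (simp add: polyfun_add)
qed

lemma polyfun_shift: "polyfun F \<Longrightarrow> polyfun (\<lambda>t. F (t + a))"
  unfolding polyfun_def
proof (elim exE)
  fix p assume p: "\<forall>t. F t = poly p (complex_of_real t)"
  show "\<exists>q. \<forall>t. F (t + a) = poly q (complex_of_real t)"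
    by (rule exI[of _ "pcompose p [:complex_of_real a, 1:]"]) (simp add: p poly_pcompose add.commute)
qed

lemma polyfun_scale: "polyfun F \<Longrightarrow> polyfun (\<lambda>t. F (c * t))"
  unfolding polyfun_def
proof (elim exE)
  fix p assume p: "\<forall>t. F t = poly p (complex_of_real t)"
  show "\<exists>q. \<forall>t. F (c * t) = poly q (complex_of_real t)"
    by (rule exI[of _ "pcompose p [:0, complex_of_real c:]"]) (simp add: p poly_pcompose mult.commute)
qed

lemma polyfun_gchoose: "polyfun (\<lambda>t. complex_of_real (t gchoose i))"
proof -
  define p where "p = smult (inverse (fact i)) (\<Prod>j = 0..<i. [:- of_nat j, 1:] :: complex poly)"
  have "complex_of_real (t gchoose i) = poly p (complex_of_real t)" for t
  proof -
    have "t gchoose i = (\<Prod>j = 0..<i. t - of_nat j) / fact i"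
      using gbinomial_mult_fact'[of t i] by (simp add: field_simps)
    then have "complex_of_real (t gchoose i) = complex_of_real (\<Prod>j = 0..<i. t - of_nat j) / complex_of_real (fact i)"
      by simp
    also have "\<dots> = poly p (complex_of_real t)"
      by (simp add: p_def poly_prod of_real_prod field_simps)
    finally show ?thesis .
  qed
  then show ?thesis unfolding polyfun_def by blast
qed

lemma polyfun_cont: "polyfun F \<Longrightarrow> continuous_on UNIV F"
  unfolding polyfun_def
proof (elim exE)
  fix p assume p: "\<forall>t. F t = poly p (complex_of_real t)"
  have eq: "F = (\<lambda>t. \<Sum>i\<le>degree p. coeff p i * complex_of_real t ^ i)"
    using p by (simp add: fun_eq_iff poly_altdef)
  show "continuous_on UNIV F" unfolding eq by (intro continuous_intros)
qed

lemma polyfun_eq: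
  assumes "polyfun F" "polyfun G" "infinite S" "\<forall>t\<in>S. F t = G t"
  shows "F t = G t"
proof -
  obtain p q where p: "\<forall>t. F t = poly p (complex_of_real t)" and q: "\<forall>t. G t = poly q (complex_of_real t)"
    using assms(1,2) unfolding polyfun_def by blast
  have "complex_of_real ` S \<subseteq> {z. poly (p - q) z = 0}"
    using assms(4) p q by auto
  moreover have "infinite (complex_of_real ` S)"
    using assms(3) by (metis finite_imageD inj_onI of_real_eq_iff)
  ultimately have "p - q = 0"
    using poly_roots_finite[of "p - q"] finite_subset by blast
  then show ?thesis using p q by simp
qed

lemma evop_X_pow: "evop h ([:0, 1:] ^ k) g x = g (x + real k *\<^sub>R h)"
proof (induction k arbitrary: x)
  case 0
  then show ?case using evop_one[of h g] by simp
next
  case (Suc k)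
  have "evop h ([:0, 1:] ^ Suc k) g x = evop h [:0, 1:] (evop h ([:0, 1:] ^ k) g) x"
    by (simp only: power_Suc evop_mult)
  also have "\<dots> = evop h ([:0, 1:] ^ k) g (x + h)" by (simp add: evop_pCons)
  also have "\<dots> = g (x + real (Suc k) *\<^sub>R h)" by (simp add: Suc.IH algebra_simps)
  finally show ?case .
qed

lemma evop_Dop_pow: "evop h ([:-1, 1:] ^ i) g = (Dop h ^^ i) g"
proof (induction i)
  case 0
  then show ?case by (simp add: evop_one)
next
  case (Suc i)
  then show ?case by (simp only: power_Suc evop_mult funpow.simps o_apply Dop_evop)
qed

lemma newton:
  "g (x + real k *\<^sub>R h) = (\<Sum>i\<le>k. of_nat (k choose i) * (Dop h ^^ i) g x)"
proof -
  have "[:0, 1:] = [:-1, 1:] + (1 :: complex poly)" by (simp add: one_pCons)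
  then have "[:0, 1:] ^ k = (\<Sum>i\<le>k. of_nat (k choose i) * [:-1, 1:] ^ i * (1 :: complex poly) ^ (k - i))"
    by (simp add: binomial_ring)
  then have "g (x + real k *\<^sub>R h) = evop h (\<Sum>i\<le>k. smult (of_nat (k choose i)) ([:-1, 1:] ^ i)) g x"
    by (simp add: evop_X_pow[symmetric] of_nat_poly)
  also have "\<dots> = (\<Sum>i\<le>k. of_nat (k choose i) * (Dop h ^^ i) g x)"
    by (simp add: evop_sum_poly evop_smult evop_Dop_pow)
  finally show ?thesis .
qed

lemma newton_trunc:
  assumes "\<And>i. i \<ge> m \<Longrightarrow> (Dop h ^^ i) g = (\<lambda>x. 0)"
  shows "g (x + real k *\<^sub>R h) = (\<Sum>i<m. complex_of_real (real k gchoose i) * (Dop h ^^ i) g x)"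
proof -
  have "g (x + real k *\<^sub>R h) = (\<Sum>i\<le>k. of_nat (k choose i) * (Dop h ^^ i) g x)" by (rule newton)
  also have "\<dots> = (\<Sum>i\<le>k + m. of_nat (k choose i) * (Dop h ^^ i) g x)"
    by (rule sum.mono_neutral_left) auto
  also have "\<dots> = (\<Sum>i<m. of_nat (k choose i) * (Dop h ^^ i) g x)"
    by (rule sum.mono_neutral_right) (auto simp: assms)
  also have "\<dots> = (\<Sum>i<m. complex_of_real (real k gchoose i) * (Dop h ^^ i) g x)"
  proof (intro sum.cong refl)
    fix i
    have "real (k choose i) = real k gchoose i" by (simp add: binomial_gbinomial)
    then have "(of_nat (k choose i) :: complex) = complex_of_real (real k gchoose i)"
      by (metis of_real_of_nat_eq)
    then show "of_nat (k choose i) * (Dop h ^^ i) g x = complex_of_real (real k gchoose i) * (Dop h ^^ i) g x"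
      by simp
  qed
  finally show ?thesis .
qed


lemma Dop_pow_zero: "(Dop h ^^ k) (\<lambda>x. 0) = (\<lambda>x. 0)"
  by (induction k) (auto simp: Dop_def)

lemma line_poly:
  fixes V :: "('a::real_normed_vector \<Rightarrow> complex) set"
  assumes tV: "tinv V"
    and Z: "\<And>s g. g \<in> V \<Longrightarrow> (Dop (s *\<^sub>R u) ^^ m) g = (\<lambda>x. 0)"
    and g: "g \<in> V"
  shows "g (x + t *\<^sub>R u) = (\<Sum>i<m. complex_of_real (t gchoose i) * (Dop u ^^ i) g x)"
proof -
  define Q where "Q = (\<lambda>x h t. \<Sum>i<m. complex_of_real (t gchoose i) * (Dop h ^^ i) g x)"
  have Qpoly: "polyfun (Q x h)" for x h
    unfolding Q_def by (intro polyfun_sum polyfun_mult polyfun_gchoose polyfun_const)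
  have A: "g (x + real k *\<^sub>R (s *\<^sub>R u)) = Q x (s *\<^sub>R u) (real k)" for x s k
  proof -
    have "(Dop (s *\<^sub>R u) ^^ i) g = (\<lambda>x. 0)" if "i \<ge> m" for i
    proof -
      have "(Dop (s *\<^sub>R u) ^^ i) g = (Dop (s *\<^sub>R u) ^^ (i - m)) ((Dop (s *\<^sub>R u) ^^ m) g)"
        using that by (metis funpow_add le_add_diff_inverse2 o_apply)
      then show ?thesis using Z[OF g] Dop_pow_zero by simp
    qed
    then show ?thesis unfolding Q_def by (rule newton_trunc)
  qed
  have A1: "g (x + real k *\<^sub>R u) = Q x u (real k)" for x k
    using A[of x k 1] by simp
  have B: "g (x + (real k / real (Suc n)) *\<^sub>R u) = Q x u (real k / real (Suc n))" for x k n
  proof -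
    define c where "c = real (Suc n)"
    have c0: "c > 0" by (simp add: c_def)
    define h where "h = (1 / c) *\<^sub>R u"
    have eq: "Q x h (c * t) = Q x u t" for t
    proof (rule polyfun_eq[where S = "range real"])
      show "polyfun (\<lambda>t. Q x h (c * t))" by (rule polyfun_scale[OF Qpoly])
      show "polyfun (Q x u)" by (rule Qpoly)
      show "infinite (range real)" by (rule range_inj_infinite) (simp add: inj_on_def)
      show "\<forall>t\<in>range real. Q x h (c * t) = Q x u t"
      proof
        fix t assume "t \<in> range real"
        then obtain j where j: "t = real j" by blast
        have "Q x h (c * t) = Q x h (real (Suc n * j))" by (simp add: c_def j algebra_simps)
        also have "\<dots> = g (x + real (Suc n * j) *\<^sub>R h)" unfolding h_def by (rule A[symmetric])
        also have "real (Suc n * j) *\<^sub>R h = real j *\<^sub>R u"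
          using c0 by (simp add: h_def c_def field_simps)
        also have "g (x + real j *\<^sub>R u) = Q x u t" by (simp add: A1 j)
        finally show "Q x h (c * t) = Q x u t" .
      qed
    qed
    have "Q x u (real k / c) = Q x h (c * (real k / c))" by (rule eq[symmetric])
    also have "\<dots> = Q x h (real k)" using c0 by simp
    also have "\<dots> = g (x + real k *\<^sub>R h)" unfolding h_def by (rule A[symmetric])
    also have "\<dots> = g (x + (real k / c) *\<^sub>R u)" by (simp add: h_def)
    finally show ?thesis by (simp add: c_def)
  qed
  have gc: "continuous_on UNIV g" using tinv_cont[OF tV g] .
  have C: "g (x + t *\<^sub>R u) = Q x u t" if t0: "t \<ge> 0" for x t
  proof -
    define tn where "tn = (\<lambda>n. real (nat \<lfloor>real (Suc n) * t\<rfloor>) / real (Suc n))"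
    have tn_eq: "g (x + tn n *\<^sub>R u) = Q x u (tn n)" for n
      unfolding tn_def by (rule B)
    have fl: "real (nat \<lfloor>real (Suc n) * t\<rfloor>) = of_int \<lfloor>real (Suc n) * t\<rfloor>" for n
      using t0 by simp
    have lim: "tn \<longlonglongrightarrow> t"
    proof (rule tendsto_sandwich[of "\<lambda>n. t + - inverse (real (Suc n))" _ _ "\<lambda>n. t"])
      show "\<forall>\<^sub>F n in sequentially. t + - inverse (real (Suc n)) \<le> tn n"
      proof (rule always_eventually, rule allI)
        fix n
        have le: "real (Suc n) * t - 1 \<le> of_int \<lfloor>real (Suc n) * t\<rfloor>" by linarith
        have "t + - inverse (real (Suc n)) = (real (Suc n) * t - 1) / real (Suc n)"
          by (simp add: field_simps)
        also have "\<dots> \<le> of_int \<lfloor>real (Suc n) * t\<rfloor> / real (Suc n)"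
          by (rule divide_right_mono[OF le]) simp
        finally show "t + - inverse (real (Suc n)) \<le> tn n"
          unfolding tn_def fl .
      qed
      show "\<forall>\<^sub>F n in sequentially. tn n \<le> t"
      proof (rule always_eventually, rule allI)
        fix n
        have "of_int \<lfloor>real (Suc n) * t\<rfloor> \<le> real (Suc n) * t" by linarith
        then show "tn n \<le> t"
          unfolding tn_def fl by (simp add: field_simps)
      qed
      show "(\<lambda>n. t + - inverse (real (Suc n))) \<longlonglongrightarrow> t"
        by (rule LIMSEQ_inverse_real_of_nat_add_minus)
      show "(\<lambda>n. t) \<longlonglongrightarrow> t" by simp
    qed
    have c1: "continuous_on UNIV (\<lambda>\<tau>. g (x + \<tau> *\<^sub>R u))"
      by (rule continuous_on_compose2[OF gc]) (auto intro!: continuous_intros)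
    have c2: "continuous_on UNIV (Q x u)" by (rule polyfun_cont[OF Qpoly])
    have i1: "isCont (\<lambda>\<tau>. g (x + \<tau> *\<^sub>R u)) t"
      using c1 continuous_on_eq_continuous_at[of UNIV] by auto
    have i2: "isCont (Q x u) t"
      using c2 continuous_on_eq_continuous_at[of UNIV] by auto
    have l1: "(\<lambda>n. g (x + tn n *\<^sub>R u)) \<longlonglongrightarrow> g (x + t *\<^sub>R u)"
      by (rule isCont_tendsto_compose[OF i1 lim])
    have l2: "(\<lambda>n. Q x u (tn n)) \<longlonglongrightarrow> Q x u t"
      by (rule isCont_tendsto_compose[OF i2 lim])
    have "(\<lambda>n. g (x + tn n *\<^sub>R u)) = (\<lambda>n. Q x u (tn n))"
      using tn_eq by simp
    with l1 l2 show ?thesis using LIMSEQ_unique by metis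
  qed
  show ?thesis
  proof (cases "t \<ge> 0")
    case True
    then show ?thesis using C unfolding Q_def by simp
  next
    case False
    define y where "y = x + t *\<^sub>R u"
    have "Q x u (0 + t) = Q y u 0"
    proof (rule polyfun_eq[where S = "range (\<lambda>n. real n - t)"])
      show "polyfun (\<lambda>s. Q x u (s + t))" by (rule polyfun_shift[OF Qpoly])
      show "polyfun (Q y u)" by (rule Qpoly)
      show "infinite (range (\<lambda>n. real n - t))" by (rule range_inj_infinite) (simp add: inj_on_def)
      show "\<forall>s\<in>range (\<lambda>n. real n - t). Q x u (s + t) = Q y u s"
      proof
        fix s assume "s \<in> range (\<lambda>n. real n - t)"
        then obtain j where j: "s = real j - t" by blast
        then have s0: "s \<ge> 0" "s + t \<ge> 0" using False by auto
        have "Q y u s = g (y + s *\<^sub>R u)" using C[OF s0(1)] by simp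
        also have "\<dots> = g (x + (s + t) *\<^sub>R u)" by (simp add: y_def algebra_simps)
        also have "\<dots> = Q x u (s + t)" using C[OF s0(2)] by simp
        finally show "Q x u (s + t) = Q y u s" by simp
      qed
    qed
    also have "\<dots> = g y" using C[of 0 y] by simp
    finally show ?thesis by (simp add: Q_def y_def)
  qed
qed


definition rpoly :: "(real \<Rightarrow> real) \<Rightarrow> bool" where
  "rpoly F \<longleftrightarrow> (\<exists>p. \<forall>t. F t = poly p t)"

lemma rpoly_mult: "rpoly F \<Longrightarrow> rpoly G \<Longrightarrow> rpoly (\<lambda>t. F t * G t)"
  unfolding rpoly_def by (metis poly_mult)

lemma rpoly_scale: "rpoly F \<Longrightarrow> rpoly (\<lambda>t. F (c * t))"
  unfolding rpoly_def
proof (elim exE)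
  fix p assume p: "\<forall>t. F t = poly p t"
  show "\<exists>q. \<forall>t. F (c * t) = poly q t"
    by (rule exI[of _ "pcompose p [:0, c:]"]) (simp add: p poly_pcompose mult.commute)
qed

lemma rpoly_gchoose: "rpoly (\<lambda>t. t gchoose i)"
proof -
  define p where "p = smult (inverse (fact i)) (\<Prod>j = 0..<i. [:- of_nat j, 1:] :: real poly)"
  have "t gchoose i = poly p t" for t
  proof -
    have "t gchoose i = (\<Prod>j = 0..<i. t - of_nat j) / fact i"
      using gbinomial_mult_fact'[of t i] by (simp add: field_simps)
    then show ?thesis by (simp add: p_def poly_prod field_simps)
  qed
  then show ?thesis unfolding rpoly_def by blast
qed

lemma rpoly_expand:
  assumes "finite K" "\<And>\<kappa>. \<kappa> \<in> K \<Longrightarrow> rpoly (f \<kappa>)"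
  shows "\<exists>M c. \<forall>\<kappa>\<in>K. \<forall>t. f \<kappa> t = (\<Sum>k<M. c \<kappa> k * t ^ k)"
proof -
  obtain p where p: "\<And>\<kappa>. \<kappa> \<in> K \<Longrightarrow> \<forall>t. f \<kappa> t = poly (p \<kappa>) t"
    using assms(2) unfolding rpoly_def by metis
  define M where "M = Suc (\<Sum>\<kappa>\<in>K. degree (p \<kappa>))"
  have H: "\<forall>\<kappa>\<in>K. \<forall>t. f \<kappa> t = (\<Sum>k<M. coeff (p \<kappa>) k * t ^ k)"
  proof (intro ballI allI)
    fix \<kappa> t assume k: "\<kappa> \<in> K"
    have dl: "degree (p \<kappa>) < M"
      using member_le_sum[of \<kappa> K "\<lambda>\<kappa>. degree (p \<kappa>)"] k assms(1) by (simp add: M_def)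
    have "f \<kappa> t = (\<Sum>k\<le>degree (p \<kappa>). coeff (p \<kappa>) k * t ^ k)"
      using p[OF k] by (simp add: poly_altdef)
    also have "\<dots> = (\<Sum>k<M. coeff (p \<kappa>) k * t ^ k)"
      by (rule sum.mono_neutral_left) (use dl in \<open>auto simp: coeff_eq_0\<close>)
    finally show "f \<kappa> t = (\<Sum>k<M. coeff (p \<kappa>) k * t ^ k)" .
  qed
  show ?thesis by (rule exI[of _ M], rule exI[of _ "\<lambda>\<kappa> k. coeff (p \<kappa>) k"]) (use H in simp)
qed

lemma ip_const: "is_polynomial_fun (\<lambda>x. c)"
  unfolding is_polynomial_fun_def
  by (rule exI[of _ "{\<lambda>_. 0}"], rule exI[of _ "\<lambda>_. c"]) simp

lemma ip_add:
  assumes "is_polynomial_fun f" "is_polynomial_fun g"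
  shows "is_polynomial_fun (\<lambda>x. f x + g x)"
proof -
  obtain E1 c1 where 1: "finite E1" "\<forall>x. f x = (\<Sum>\<alpha>\<in>E1. c1 \<alpha> * (\<Prod>i\<in>UNIV. complex_of_real ((x $ i) ^ \<alpha> i)))"
    using assms(1) unfolding is_polynomial_fun_def by blast
  obtain E2 c2 where 2: "finite E2" "\<forall>x. g x = (\<Sum>\<alpha>\<in>E2. c2 \<alpha> * (\<Prod>i\<in>UNIV. complex_of_real ((x $ i) ^ \<alpha> i)))"
    using assms(2) unfolding is_polynomial_fun_def by blast
  define c where "c = (\<lambda>\<alpha>. (if \<alpha> \<in> E1 then c1 \<alpha> else 0) + (if \<alpha> \<in> E2 then c2 \<alpha> else 0))"
  have "f x + g x = (\<Sum>\<alpha>\<in>E1 \<union> E2. c \<alpha> * (\<Prod>i\<in>UNIV. complex_of_real ((x $ i) ^ \<alpha> i)))" for x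
  proof -
    let ?m = "\<lambda>\<alpha>. (\<Prod>i\<in>UNIV. complex_of_real ((x $ i) ^ \<alpha> i))"
    have a: "(\<Sum>\<alpha>\<in>E1 \<union> E2. (if \<alpha> \<in> E1 then c1 \<alpha> else 0) * ?m \<alpha>) = (\<Sum>\<alpha>\<in>E1. c1 \<alpha> * ?m \<alpha>)"
      by (subst sum.mono_neutral_right[of "E1 \<union> E2" E1]) (auto simp: 1 2)
    have b: "(\<Sum>\<alpha>\<in>E1 \<union> E2. (if \<alpha> \<in> E2 then c2 \<alpha> else 0) * ?m \<alpha>) = (\<Sum>\<alpha>\<in>E2. c2 \<alpha> * ?m \<alpha>)"
      by (subst sum.mono_neutral_right[of "E1 \<union> E2" E2]) (auto simp: 1 2)
    show ?thesis using a b 1 2 by (simp add: c_def distrib_right sum.distrib)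
  qed
  then show ?thesis unfolding is_polynomial_fun_def using 1 2 by blast
qed

lemma ip_sum: "(\<And>k. k \<in> K \<Longrightarrow> is_polynomial_fun (F k)) \<Longrightarrow> is_polynomial_fun (\<lambda>x. \<Sum>k\<in>K. F k x)"
proof (induction K rule: infinite_finite_induct)
  case (infinite A) then show ?case by (simp add: ip_const)
next
  case empty then show ?case by (simp add: ip_const)
next
  case (insert a A) then show ?case by (simp add: ip_add)
qed

lemma ip_monom:
  fixes f :: "real ^ 'n::finite \<Rightarrow> complex"
  assumes "is_polynomial_fun f"
  shows "is_polynomial_fun (\<lambda>x. complex_of_real ((x $ j) ^ k) * f x)"
proof -
  obtain E c where E: "finite E" "\<forall>x. f x = (\<Sum>\<alpha>\<in>E. c \<alpha> * (\<Prod>i\<in>UNIV. complex_of_real ((x $ i) ^ \<alpha> i)))"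
    using assms unfolding is_polynomial_fun_def by blast
  define \<sigma> where "\<sigma> = (\<lambda>\<alpha>::'n \<Rightarrow> nat. \<alpha>(j := \<alpha> j + k))"
  define c' where "c' = (\<lambda>\<beta>::'n \<Rightarrow> nat. c (\<beta>(j := \<beta> j - k)))"
  have inj: "inj_on \<sigma> E"
    unfolding inj_on_def \<sigma>_def fun_eq_iff by (metis add_right_cancel fun_upd_apply)
  have c'\<sigma>: "c' (\<sigma> \<alpha>) = c \<alpha>" for \<alpha>
    by (simp add: c'_def \<sigma>_def fun_upd_idem)
  have m\<sigma>: "(\<Prod>i\<in>UNIV. complex_of_real ((x $ i) ^ \<sigma> \<alpha> i)) =
      complex_of_real ((x $ j) ^ k) * (\<Prod>i\<in>UNIV. complex_of_real ((x $ i) ^ \<alpha> i))" for x \<alpha>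
  proof -
    have "(\<Prod>i\<in>UNIV. complex_of_real ((x $ i) ^ \<sigma> \<alpha> i)) =
        complex_of_real ((x $ j) ^ \<sigma> \<alpha> j) * (\<Prod>i\<in>UNIV - {j}. complex_of_real ((x $ i) ^ \<sigma> \<alpha> i))"
      by (simp add: prod.remove)
    also have "(\<Prod>i\<in>UNIV - {j}. complex_of_real ((x $ i) ^ \<sigma> \<alpha> i)) = (\<Prod>i\<in>UNIV - {j}. complex_of_real ((x $ i) ^ \<alpha> i))"
      by (intro prod.cong refl) (simp add: \<sigma>_def)
    also have "complex_of_real ((x $ j) ^ \<sigma> \<alpha> j) = complex_of_real ((x $ j) ^ k) * complex_of_real ((x $ j) ^ \<alpha> j)"
      by (simp add: \<sigma>_def power_add)
    also have "(\<Prod>i\<in>UNIV. complex_of_real ((x $ i) ^ \<alpha> i)) = complex_of_real ((x $ j) ^ \<alpha> j) * (\<Prod>i\<in>UNIV - {j}. complex_of_real ((x $ i) ^ \<alpha> i))"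
      by (simp add: prod.remove)
    ultimately show ?thesis by (simp add: mult_ac)
  qed
  have "complex_of_real ((x $ j) ^ k) * f x = (\<Sum>\<beta>\<in>\<sigma> ` E. c' \<beta> * (\<Prod>i\<in>UNIV. complex_of_real ((x $ i) ^ \<beta> i)))" for x
  proof -
    have "(\<Sum>\<beta>\<in>\<sigma> ` E. c' \<beta> * (\<Prod>i\<in>UNIV. complex_of_real ((x $ i) ^ \<beta> i)))
        = (\<Sum>\<alpha>\<in>E. c' (\<sigma> \<alpha>) * (\<Prod>i\<in>UNIV. complex_of_real ((x $ i) ^ \<sigma> \<alpha> i)))"
      by (simp only: sum.reindex[OF inj] o_def)
    also have "\<dots> = (\<Sum>\<alpha>\<in>E. complex_of_real ((x $ j) ^ k) * (c \<alpha> * (\<Prod>i\<in>UNIV. complex_of_real ((x $ i) ^ \<alpha> i))))"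
      by (intro sum.cong refl) (simp only: c'\<sigma> m\<sigma> mult_ac)
    also have "\<dots> = complex_of_real ((x $ j) ^ k) * f x"
      by (simp only: sum_distrib_left[symmetric] E(2)[rule_format])
    finally show ?thesis by simp
  qed
  then show ?thesis unfolding is_polynomial_fun_def using E(1) by blast
qed


context pqctx begin

lemma null_line:
  assumes s: "s = 1 \<or> s = -1" and g: "g \<in> V"
  shows "g (y + \<tau> *\<^sub>R nullv a b s) = (\<Sum>i<card B. complex_of_real (\<tau> gchoose i) * (Dop (nullv a b s) ^^ i) g y)"
  by (rule line_poly[OF tV _ g]) (rule null_Dop_zero[OF s])

lemma axis_decomp:
  "\<exists>a0 b0 \<sigma>. \<forall>t. t *\<^sub>R axis i (1::real) = ((1/2) * t) *\<^sub>R nullv a0 b0 1 + (\<sigma> * t) *\<^sub>R nullv a0 b0 (-1)"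
proof (cases i)
  case (Inl a)
  show ?thesis
    by (rule exI[of _ a], rule exI[of _ undefined], rule exI[of _ "1/2"])
       (auto simp: vec_eq_iff nullv_def axis_def Inl)
next
  case (Inr b)
  show ?thesis
    by (rule exI[of _ undefined], rule exI[of _ b], rule exI[of _ "-1/2"])
       (auto simp: vec_eq_iff nullv_def axis_def Inr)
qed

lemma axis_good:
  assumes g: "g \<in> V"
  shows "\<exists>M a. (\<forall>k<M. a k \<in> V) \<and> (\<forall>x t. g (x + t *\<^sub>R axis i 1) = (\<Sum>k<M. complex_of_real (t ^ k) * a k x))"
proof -
  obtain a0 b0 \<sigma> where ab: "\<And>t. t *\<^sub>R axis i (1::real) = ((1/2) * t) *\<^sub>R nullv a0 b0 1 + (\<sigma> * t) *\<^sub>R nullv a0 b0 (-1)"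
    using axis_decomp by blast
  define u1 where "u1 = nullv a0 b0 (1::real)"
  define u2 where "u2 = nullv a0 b0 (-1::real)"
  define N where "N = card B"
  define K where "K = {..<N} \<times> {..<N}"
  define f where "f = (\<lambda>(i::nat, l::nat) t. (((1/2) * t) gchoose i) * ((\<sigma> * t) gchoose l))"
  define A where "A = (\<lambda>(i::nat, l::nat). (Dop u2 ^^ l) ((Dop u1 ^^ i) g))"
  have AV: "A \<kappa> \<in> V" for \<kappa>
    unfolding A_def by (cases \<kappa>) (simp add: tinv_Dop_pow[OF tV] tinv_Dop_pow[OF tV g])
  have expand: "g (x + t *\<^sub>R axis i 1) = (\<Sum>\<kappa>\<in>K. complex_of_real (f \<kappa> t) * A \<kappa> x)" for x t
  proof -
    have "g (x + t *\<^sub>R axis i 1) = g ((x + (\<sigma> * t) *\<^sub>R u2) + ((1/2) * t) *\<^sub>R u1)"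
      by (simp add: ab u1_def u2_def algebra_simps)
    also have "\<dots> = (\<Sum>j<N. complex_of_real (((1/2) * t) gchoose j) * (Dop u1 ^^ j) g (x + (\<sigma> * t) *\<^sub>R u2))"
      unfolding u1_def N_def by (rule null_line[OF _ g]) simp
    also have "\<dots> = (\<Sum>j<N. complex_of_real (((1/2) * t) gchoose j) *
        (\<Sum>l<N. complex_of_real ((\<sigma> * t) gchoose l) * (Dop u2 ^^ l) ((Dop u1 ^^ j) g) x))"
      unfolding u2_def N_def
      by (intro sum.cong refl arg_cong2[where f = "(*)"] null_line tinv_Dop_pow[OF tV g]) simp
    also have "\<dots> = (\<Sum>j<N. \<Sum>l<N. complex_of_real (f (j, l) t) * A (j, l) x)"
      by (simp add: sum_distrib_left f_def A_def mult_ac)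
    also have "\<dots> = (\<Sum>\<kappa>\<in>K. complex_of_real (f \<kappa> t) * A \<kappa> x)"
      unfolding K_def by (simp add: sum.cartesian_product)
    finally show ?thesis .
  qed
  have rp: "rpoly (f \<kappa>)" for \<kappa>
  proof (cases \<kappa>)
    case (Pair i l)
    have r1: "rpoly (\<lambda>t. ((1/2) * t) gchoose i)" by (rule rpoly_scale[OF rpoly_gchoose])
    have r2: "rpoly (\<lambda>t. (\<sigma> * t) gchoose l)" by (rule rpoly_scale[OF rpoly_gchoose])
    show ?thesis using rpoly_mult[OF r1 r2] by (simp add: f_def Pair)
  qed
  obtain M c where Mc: "\<forall>\<kappa>\<in>K. \<forall>t. f \<kappa> t = (\<Sum>k<M. c \<kappa> k * t ^ k)"
    using rpoly_expand[of K f] rp by (auto simp: K_def)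
  define a where "a = (\<lambda>k x. \<Sum>\<kappa>\<in>K. complex_of_real (c \<kappa> k) * A \<kappa> x)"
  have aV: "a k \<in> V" for k
    unfolding a_def by (rule tinv_lincomb[OF tV AV])
  have "g (x + t *\<^sub>R axis i 1) = (\<Sum>k<M. complex_of_real (t ^ k) * a k x)" for x t
  proof -
    have "g (x + t *\<^sub>R axis i 1) = (\<Sum>\<kappa>\<in>K. complex_of_real (\<Sum>k<M. c \<kappa> k * t ^ k) * A \<kappa> x)"
      using expand Mc by simp
    also have "\<dots> = (\<Sum>\<kappa>\<in>K. \<Sum>k<M. complex_of_real (t ^ k) * (complex_of_real (c \<kappa> k) * A \<kappa> x))"
      by (intro sum.cong refl) (simp add: sum_distrib_left sum_distrib_right mult_ac)
    also have "\<dots> = (\<Sum>k<M. complex_of_real (t ^ k) * a k x)"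
      unfolding a_def by (simp add: sum.swap[of _ K] sum_distrib_left)
    finally show ?thesis .
  qed
  then show ?thesis using aV by blast
qed

lemma restr_poly:
  assumes "finite S"
  shows "\<forall>g\<in>V. is_polynomial_fun (\<lambda>x. g (\<chi> i. if i \<in> S then x $ i else 0))"
  using assms
proof (induction S rule: finite_induct)
  case empty
  show ?case by (simp add: ip_const)
next
  case (insert j S)
  show ?case
  proof
    fix g assume g: "g \<in> V"
    obtain M a where Ma: "\<forall>k<M. a k \<in> V" "\<forall>x t. g (x + t *\<^sub>R axis j 1) = (\<Sum>k<M. complex_of_real (t ^ k) * a k x)"
      using axis_good[OF g] by blast
    have pr: "(\<chi> i. if i \<in> insert j S then x $ i else 0) = (\<chi> i. if i \<in> S then x $ i else 0) + (x $ j) *\<^sub>R axis j 1" for x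
      using insert.hyps(2) by (auto simp: vec_eq_iff axis_def)
    have eq: "(\<lambda>x. g (\<chi> i. if i \<in> insert j S then x $ i else 0)) =
        (\<lambda>x. \<Sum>k<M. complex_of_real ((x $ j) ^ k) * a k (\<chi> i. if i \<in> S then x $ i else 0))"
      by (simp only: pr Ma(2))
    have "is_polynomial_fun (\<lambda>x. \<Sum>k<M. complex_of_real ((x $ j) ^ k) * a k (\<chi> i. if i \<in> S then x $ i else 0))"
      using insert.IH Ma(1) by (intro ip_sum ip_monom) auto
    then show "is_polynomial_fun (\<lambda>x. g (\<chi> i. if i \<in> insert j S then x $ i else 0))"
      unfolding eq .
  qed
qed

lemma all_poly: "g \<in> V \<Longrightarrow> is_polynomial_fun g"
  using restr_poly[of UNIV] by simp

end

theorem mainTheorem12: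
  fixes V :: "(real ^ ('p::finite + 'q::finite) \<Rightarrow> complex) set"
    and f :: "real ^ ('p + 'q) \<Rightarrow> complex"
  assumes "cont_subspace V"
    and "fin_dim_fun V"
    and "\<forall>h. \<forall>g\<in>V. translate h g \<in> V"
    and "\<forall>A\<in>indef_orth_group. \<forall>g\<in>V. compose_lin A g \<in> V"
    and "f \<in> V"
  shows "is_polynomial_fun f"
proof -
  obtain B where B: "finite B" "B \<subseteq> V" "V = {(\<lambda>x. \<Sum>b\<in>B. c b * b x) | c. True}"
    using assms(2) unfolding fin_dim_fun_def by blast
  have tV: "tinv V" using assms(1,3) by (simp add: tinv_def)
  interpret pqctx V B using tV assms(4) B by unfold_locales
  show ?thesis by (rule all_poly[OF assms(5)])
qed


end
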